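(* For every sufficiently large $n$ there is a tensor $T\in\mathbb{C}^{n\times n\times n}$ with $T\notin\overline{\mathrm{OT}_n(\mathbb{C})}$ such that, for each of its three families of slices (the $x$-, $y$- and $z$-slices), denoted $M_1,\dots,M_n$, and for each of the two families of $n^2$ matrices $\{M_k^TM_l\}_{k,l}$ and $\{M_kM_l^T\}_{k,l}$, the following hold: (i) the matrices of the family are symmetric and pairwise commute; (ii) the subalgebra of $M_n(\mathbb{C})$ generated by the matrices of the family and the identity matrix has dimension at most $n$; (iii) the centralizer of the matrices of the family has dimension at least $n$.
   Context: Associate to $T$ the trilinear form $t=\sum_{i,j,k}T_{ijk}x_iy_jz_k$. $\mathrm{OT}_n(\mathbb{C})$ is the set of tensors whose trilinear form can be written $g(Ax,By,Cz)$ with $A,B,C\in M_n(\mathbb{C})$ satisfying $A^TA=B^TB=C^TC=\mathrm{Id}$ and $g=\sum_{i=1}^n\alpha_ix_iy_iz_i$; closure is in the Euclidean topology. Slices: $X_k=(T_{kjl})_{j,l}$, $Y_k=(T_{ikl})_{i,l}$, $Z_k=(T_{ijk})_{i,j}$. The centralizer of a set of matrices is the set of $M\in M_n(\mathbb{C})$ commuting with all of them. *)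

theory Defs
  imports "HOL-Library.Function_Algebras" "HOL-Analysis.Analysis"
begin

text \<open>Square n x n complex matrices are represented as functions
  nat => nat => complex that vanish outside {0..<n} x {0..<n};
  tensors in C^(n x n x n) as functions nat => nat => nat => complex
  vanishing outside {0..<n}^3.  Indices run over 0..<n.\<close>

type_synonym cmat = "nat \<Rightarrow> nat \<Rightarrow> complex"
type_synonym ctensor = "nat \<Rightarrow> nat \<Rightarrow> nat \<Rightarrow> complex"

definition sqmats :: "nat \<Rightarrow> cmat set" where
  "sqmats n = {M. \<forall>i j. \<not> (i < n \<and> j < n) \<longrightarrow> M i j = 0}"

definition tensors :: "nat \<Rightarrow> ctensor set" where
  "tensors n = {T. \<forall>i j k. \<not> (i < n \<and> j < n \<and> k < n) \<longrightarrow> T i j k = 0}"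

definition mmult :: "nat \<Rightarrow> cmat \<Rightarrow> cmat \<Rightarrow> cmat" where
  "mmult n A B = (\<lambda>i j. \<Sum>l<n. A i l * B l j)"

definition mtrans :: "cmat \<Rightarrow> cmat" where
  "mtrans A = (\<lambda>i j. A j i)"

definition mid :: "nat \<Rightarrow> cmat" where
  "mid n = (\<lambda>i j. if i = j \<and> i < n then 1 else 0)"

definition mscale :: "complex \<Rightarrow> cmat \<Rightarrow> cmat" where
  "mscale c A = (\<lambda>i j. c * A i j)"

definition mdim :: "cmat set \<Rightarrow> nat" where
  "mdim S = vector_space.dim mscale S"

definition orthogonal_cmat :: "nat \<Rightarrow> cmat \<Rightarrow> bool" where
  "orthogonal_cmat n A \<longleftrightarrow> A \<in> sqmats n \<and> mmult n (mtrans A) A = mid n"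

text \<open>OT_n(C): tensors whose trilinear form is g(Ax,By,Cz) with
  g = sum_l alpha_l x_l y_l z_l and A,B,C complex orthogonal, i.e.
  T_ijk = sum_l alpha_l A_li B_lj C_lk.\<close>
definition OT :: "nat \<Rightarrow> ctensor set" where
  "OT n = {T \<in> tensors n. \<exists>A B C (\<alpha>::nat \<Rightarrow> complex).
     orthogonal_cmat n A \<and> orthogonal_cmat n B \<and> orthogonal_cmat n C \<and>
     (\<forall>i<n. \<forall>j<n. \<forall>k<n. T i j k = (\<Sum>l<n. \<alpha> l * A l i * B l j * C l k))}"

definition xslice :: "ctensor \<Rightarrow> nat \<Rightarrow> cmat" where
  "xslice T k = (\<lambda>j l. T k j l)"
definition yslice :: "ctensor \<Rightarrow> nat \<Rightarrow> cmat" where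
  "yslice T k = (\<lambda>i l. T i k l)"
definition zslice :: "ctensor \<Rightarrow> nat \<Rightarrow> cmat" where
  "zslice T k = (\<lambda>i j. T i j k)"

definition subalgebra_mats :: "nat \<Rightarrow> cmat set \<Rightarrow> bool" where
  "subalgebra_mats n A \<longleftrightarrow> A \<subseteq> sqmats n \<and> 0 \<in> A \<and>
     (\<forall>X\<in>A. \<forall>Y\<in>A. X + Y \<in> A) \<and> (\<forall>c. \<forall>X\<in>A. mscale c X \<in> A) \<and>
     (\<forall>X\<in>A. \<forall>Y\<in>A. mmult n X Y \<in> A)"

definition gen_algebra :: "nat \<Rightarrow> cmat set \<Rightarrow> cmat set" where
  "gen_algebra n F = \<Inter>{A. subalgebra_mats n A \<and> F \<subseteq> A \<and> mid n \<in> A}"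

definition centralizer :: "nat \<Rightarrow> cmat set \<Rightarrow> cmat set" where
  "centralizer n F = {M \<in> sqmats n. \<forall>X\<in>F. mmult n M X = mmult n X M}"

definition symmetric_cmat :: "nat \<Rightarrow> cmat \<Rightarrow> bool" where
  "symmetric_cmat n M \<longleftrightarrow> (\<forall>i<n. \<forall>j<n. M i j = M j i)"

definition good_family :: "nat \<Rightarrow> cmat set \<Rightarrow> bool" where
  "good_family n F \<longleftrightarrow>
     (\<forall>X\<in>F. symmetric_cmat n X) \<and> (\<forall>X\<in>F. \<forall>Y\<in>F. mmult n X Y = mmult n Y X) \<and>
     mdim (gen_algebra n F) \<le> n \<and> mdim (centralizer n F) \<ge> n"

definition fam_TM :: "nat \<Rightarrow> (nat \<Rightarrow> cmat) \<Rightarrow> cmat set" where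
  "fam_TM n M = {mmult n (mtrans (M k)) (M l) | k l. k < n \<and> l < n}"
definition fam_MT :: "nat \<Rightarrow> (nat \<Rightarrow> cmat) \<Rightarrow> cmat set" where
  "fam_MT n M = {mmult n (M k) (mtrans (M l)) | k l. k < n \<and> l < n}"

end

theory Submission
  imports Defs
begin


interpretation MV: vector_space mscale
  by unfold_locales (auto simp: mscale_def fun_eq_iff algebra_simps)

definition fsc :: "complex \<Rightarrow> ('a \<Rightarrow> complex) \<Rightarrow> ('a \<Rightarrow> complex)" where
  "fsc c f = (\<lambda>x. c * f x)"

interpretation FV: vector_space fsc
  by unfold_locales (auto simp: fsc_def fun_eq_iff algebra_simps)



definition mon :: "'v set \<Rightarrow> ('v \<Rightarrow> nat) \<Rightarrow> ('v \<Rightarrow> complex) \<Rightarrow> complex" where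
  "mon X f = (\<lambda>x. \<Prod>v\<in>X. x v ^ f v)"

definition Mons :: "'v set \<Rightarrow> nat \<Rightarrow> (('v \<Rightarrow> complex) \<Rightarrow> complex) set" where
  "Mons X s = mon X ` (PiE X (\<lambda>_. {..s}))"

lemma Mons_finite: "finite X \<Longrightarrow> finite (Mons X s)"
  unfolding Mons_def by (intro finite_imageI finite_PiE) auto

lemma Mons_card: "finite X \<Longrightarrow> card (Mons X s) \<le> (s+1) ^ card X"
proof -
  assume X: "finite X"
  have "card (Mons X s) \<le> card (PiE X (\<lambda>_. {..s}))"
    unfolding Mons_def by (rule card_image_le) (intro finite_PiE X, auto)
  also have "\<dots> = (s+1) ^ card X" using X by (simp add: card_PiE)
  finally show ?thesis .
qed

lemma Mons_mono: "s \<le> t \<Longrightarrow> Mons X s \<subseteq> Mons X t"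
  unfolding Mons_def by (intro image_mono PiE_mono) auto

lemma mon_mult: "(\<lambda>x. mon X f x * mon X g x) = mon X (\<lambda>v. f v + g v)"
  unfolding mon_def by (auto simp: fun_eq_iff power_add prod.distrib)

lemma mon_restrict: "mon X (restrict f X) = mon X f"
  unfolding mon_def by (auto simp: fun_eq_iff intro!: prod.cong)

lemma Mons_mult: "a \<in> Mons X s1 \<Longrightarrow> b \<in> Mons X s2 \<Longrightarrow> (\<lambda>x. a x * b x) \<in> Mons X (s1+s2)"
proof -
  assume "a \<in> Mons X s1" "b \<in> Mons X s2"
  then obtain f g where f: "f \<in> PiE X (\<lambda>_. {..s1})" "a = mon X f"
    and g: "g \<in> PiE X (\<lambda>_. {..s2})" "b = mon X g" unfolding Mons_def by auto
  have "(\<lambda>x. a x * b x) = mon X (restrict (\<lambda>v. f v + g v) X)"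
    using f g by (simp add: mon_mult mon_restrict)
  moreover have "restrict (\<lambda>v. f v + g v) X \<in> PiE X (\<lambda>_. {..s1+s2})"
    using f(1) g(1) by (auto simp: PiE_iff add_mono)
  ultimately show ?thesis unfolding Mons_def by blast
qed

lemma span_mult_right:
  assumes b: "b \<in> FV.span B" and h: "\<And>w. w \<in> B \<Longrightarrow> (\<lambda>x. a x * w x) \<in> FV.span C"
  shows "(\<lambda>x. a x * b x) \<in> FV.span C"
  using b
proof (induction rule: FV.span_induct_alt)
  case base
  then show ?case using FV.span_zero by (simp add: zero_fun_def)
next
  case (step c x y)
  have "(\<lambda>xa. a xa * (fsc c x + y) xa) = fsc c (\<lambda>xa. a xa * x xa) + (\<lambda>xa. a xa * y xa)"
    by (auto simp: fun_eq_iff fsc_def algebra_simps)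
  then show ?case using step h FV.span_add FV.span_scale by metis
qed

lemma span_mult:
  assumes a: "a \<in> FV.span (Mons X s1)" and b: "b \<in> FV.span (Mons X s2)"
  shows "(\<lambda>x. a x * b x) \<in> FV.span (Mons X (s1+s2))"
proof -
  have "(\<lambda>x. b x * a x) \<in> FV.span (Mons X (s1+s2))"
  proof (rule span_mult_right[OF a])
    fix w assume w: "w \<in> Mons X s1"
    have "(\<lambda>x. w x * b x) \<in> FV.span (Mons X (s1+s2))"
      by (rule span_mult_right[OF b]) (auto intro!: FV.span_base Mons_mult[OF w])
    then show "(\<lambda>x. b x * w x) \<in> FV.span (Mons X (s1+s2))"
      by (simp add: mult.commute)
  qed
  then show ?thesis by (simp add: mult.commute)
qed

lemma var_Mons: "finite X \<Longrightarrow> v \<in> X \<Longrightarrow> (\<lambda>x. x v) \<in> Mons X 1"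
proof -
  assume X: "finite X" "v \<in> X"
  have "mon X (restrict (\<lambda>w. if w = v then 1 else 0) X) = (\<lambda>x. x v)"
    unfolding mon_restrict unfolding mon_def using X
    by (auto simp: fun_eq_iff if_distrib[of "\<lambda>e. _ ^ e"] prod.delta cong: if_cong)
  moreover have "restrict (\<lambda>w. if w = v then 1 else 0) X \<in> PiE X (\<lambda>_. {..1::nat})" by auto
  ultimately show ?thesis unfolding Mons_def by (metis image_eqI)
qed

lemma one_Mons: "(\<lambda>x. 1) \<in> Mons X 0"
proof -
  have "mon X (restrict (\<lambda>w. 0) X) = (\<lambda>x. 1)"
    unfolding mon_restrict unfolding mon_def by auto
  moreover have "restrict (\<lambda>w. 0) X \<in> PiE X (\<lambda>_. {..0::nat})" by auto
  ultimately show ?thesis unfolding Mons_def by (metis image_eqI)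
qed

lemma span_power:
  assumes "a \<in> FV.span (Mons X s)" shows "(\<lambda>x. a x ^ k) \<in> FV.span (Mons X (s*k))"
proof (induction k)
  case 0 then show ?case using one_Mons FV.span_base by auto
next
  case (Suc k)
  from span_mult[OF assms Suc] show ?case by (simp add: add.commute)
qed

lemma span_prod:
  assumes "finite Y" "\<And>u. u \<in> Y \<Longrightarrow> p u \<in> FV.span (Mons X (s u))"
  shows "(\<lambda>x. \<Prod>u\<in>Y. p u x) \<in> FV.span (Mons X (\<Sum>u\<in>Y. s u))"
  using assms
proof (induction Y rule: finite_induct)
  case empty then show ?case using one_Mons FV.span_base by auto
next
  case (insert y Y)
  from span_mult[OF insert(4)[of y] insert(3)] insert show ?case by simp
qed

lemma span_sum:
  assumes "finite L" "\<And>l. l \<in> L \<Longrightarrow> p l \<in> FV.span S"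
  shows "(\<lambda>x. \<Sum>l\<in>L. p l x) \<in> FV.span S"
  using assms
proof (induction L rule: finite_induct)
  case empty then show ?case using FV.span_zero by (simp add: zero_fun_def)
next
  case (insert y Y)
  have "(\<lambda>x. \<Sum>l\<in>insert y Y. p l x) = p y + (\<lambda>x. \<Sum>l\<in>Y. p l x)"
    using insert by (auto simp: fun_eq_iff)
  then show ?case using insert FV.span_add by auto
qed



lemma sum_fun_app: "(\<Sum>v\<in>t. f v) x = (\<Sum>v\<in>t. f v x)"
  by (induction t rule: infinite_finite_induct) auto

lemma dep_exists:
  assumes E: "finite E" and T: "finite T" and sp: "g ` E \<subseteq> FV.span T"
    and card: "card T < card E"
  shows "\<exists>c. (\<exists>e\<in>E. c e \<noteq> 0) \<and> (\<forall>x. (\<Sum>e\<in>E. c e * g e x) = 0)"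
proof (cases "inj_on g E")
  case True
  have "\<not> FV.independent (g ` E)"
  proof
    assume "FV.independent (g ` E)"
    from FV.independent_span_bound[OF T this sp] have "card (g ` E) \<le> card T" by simp
    with card_image[OF True] card show False by simp
  qed
  then obtain t u where t: "finite t" "t \<subseteq> g ` E" "(\<Sum>v\<in>t. fsc (u v) v) = 0"
    and v: "\<exists>v\<in>t. u v \<noteq> 0"
    unfolding FV.dependent_explicit by blast
  define c where "c e = (if g e \<in> t then u (g e) else 0)" for e
  show ?thesis
  proof (intro exI[of _ c] conjI allI)
    show "\<exists>e\<in>E. c e \<noteq> 0" using v t(2) unfolding c_def by auto
    fix x
    have "(\<Sum>e\<in>E. c e * g e x) = (\<Sum>v\<in>g ` E. (if v \<in> t then u v * v x else 0))"
      by (auto simp: sum.reindex[OF True] c_def intro!: sum.cong)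
    also have "\<dots> = (\<Sum>v\<in>t. u v * v x)"
      using t(2) E by (simp add: sum.If_cases Int_absorb1)
    also have "\<dots> = (\<Sum>v\<in>t. fsc (u v) v) x" by (simp add: sum_fun_app fsc_def)
    also have "\<dots> = 0" using t(3) by simp
    finally show "(\<Sum>e\<in>E. c e * g e x) = 0" .
  qed
next
  case False
  then obtain e1 e2 where e: "e1 \<in> E" "e2 \<in> E" "e1 \<noteq> e2" "g e1 = g e2"
    unfolding inj_on_def by blast
  define c where "c e = (if e = e1 then 1 else if e = e2 then -1 else (0::complex))" for e
  show ?thesis
  proof (intro exI[of _ c] conjI allI)
    show "\<exists>e\<in>E. c e \<noteq> 0" using e unfolding c_def by auto
    fix x
    have "(\<Sum>e\<in>E. c e * g e x) = (\<Sum>e\<in>E. (if e = e1 then g e1 x else 0) - (if e = e2 then g e2 x else 0))"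
      by (rule sum.cong) (use e in \<open>auto simp: c_def\<close>)
    also have "\<dots> = 0" using e E by (simp add: sum_subtractf)
    finally show "(\<Sum>e\<in>E. c e * g e x) = 0" .
  qed
qed



lemma digits_lt:
  assumes "\<forall>u<D. e u \<le> K"
  shows "(\<Sum>u<D. e u * (K+1)^u) < (K+1::nat)^D"
  using assms
proof (induction D)
  case 0 then show ?case by simp
next
  case (Suc D)
  have "(\<Sum>u<Suc D. e u * (K+1)^u) = (\<Sum>u<D. e u * (K+1)^u) + e D * (K+1)^D" by simp
  also have "\<dots> < (K+1)^D + K * (K+1)^D"
    using Suc by (intro add_less_le_mono mult_right_mono) auto
  also have "\<dots> = (K+1)^Suc D" by (simp add: algebra_simps)
  finally show ?case .
qed

lemma div_helper: "(a::nat) < B \<Longrightarrow> (a + x * B) div B = x"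
  by (simp add: div_less)

lemma digits_inj:
  assumes "\<forall>u<D. e u \<le> K" "\<forall>u<D. f u \<le> K"
    "(\<Sum>u<D. e u * (K+1)^u) = (\<Sum>u<D. f u * (K+1::nat)^u)"
  shows "\<forall>u<D. e u = f u"
  using assms
proof (induction D)
  case 0 then show ?case by simp
next
  case (Suc D)
  let ?B = "(K+1::nat)^D"
  have a: "(\<Sum>u<D. e u * (K+1)^u) < ?B" "(\<Sum>u<D. f u * (K+1)^u) < ?B"
    using digits_lt[of D e K] digits_lt[of D f K] Suc.prems by auto
  have eq: "(\<Sum>u<D. e u * (K+1)^u) + e D * ?B = (\<Sum>u<D. f u * (K+1)^u) + f D * ?B"
    using Suc.prems(3) by simp
  have B: "?B > 0" by simp
  have "((\<Sum>u<D. e u * (K+1)^u) + e D * ?B) div ?B = e D"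
    using a(1) by (rule div_helper)
  moreover have "((\<Sum>u<D. f u * (K+1)^u) + f D * ?B) div ?B = f D"
    using a(2) by (rule div_helper)
  ultimately have eD: "e D = f D" using eq by metis
  with eq have "(\<Sum>u<D. e u * (K+1)^u) = (\<Sum>u<D. f u * (K+1)^u)" by simp
  with Suc.IH Suc.prems have "\<forall>u<D. e u = f u" by auto
  with eD show ?case using less_Suc_eq by auto
qed

lemma poly_nonzero:
  assumes c: "\<exists>e\<in>PiE {..<D} (\<lambda>_. {..K}). c e \<noteq> 0"
  shows "\<exists>y::nat\<Rightarrow>complex. (\<Sum>e\<in>PiE {..<D} (\<lambda>_. {..K}). c e * (\<Prod>u<D. y u ^ e u)) \<noteq> 0"
proof (rule ccontr)
  let ?E = "PiE {..<D} (\<lambda>_. {..K::nat})"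
  assume "\<not> ?thesis"
  then have z: "\<And>y. (\<Sum>e\<in>?E. c e * (\<Prod>u<D. y u ^ e u)) = 0" by auto
  define s where "s e = (\<Sum>u<D. e u * (K+1)^u)" for e :: "nat \<Rightarrow> nat"
  have inj: "inj_on s ?E"
  proof (rule inj_onI)
    fix e f assume ef: "e \<in> ?E" "f \<in> ?E" "s e = s f"
    then have "\<forall>u<D. e u = f u" unfolding s_def by (intro digits_inj) (auto simp: PiE_iff)
    then show "e = f" using ef(1,2) by (auto simp: PiE_iff extensional_def fun_eq_iff) (metis lessThan_iff not_less)
  qed
  have sb: "s e \<le> (K+1)^D" if "e \<in> ?E" for e
    using digits_lt[of D e K] that unfolding s_def by (auto simp: PiE_iff)
  define c' where "c' j = (if j \<in> s ` ?E then c (the_inv_into ?E s j) else 0)" for j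
  have key: "(\<Sum>j\<le>(K+1)^D. c' j * w ^ j) = 0" for w :: complex
  proof -
    have "(\<Sum>j\<le>(K+1)^D. c' j * w ^ j) = (\<Sum>j\<in>s ` ?E. c' j * w ^ j)"
      by (rule sum.mono_neutral_right) (use sb in \<open>auto simp: c'_def\<close>)
    also have "\<dots> = (\<Sum>e\<in>?E. c e * w ^ s e)"
      by (simp add: sum.reindex[OF inj] c'_def the_inv_into_f_f[OF inj])
    also have "\<dots> = (\<Sum>e\<in>?E. c e * (\<Prod>u<D. (w ^ ((K+1)^u)) ^ e u))"
      by (rule sum.cong) (auto simp: s_def power_sum[symmetric] power_mult[symmetric] mult.commute)
    also have "\<dots> = 0" by (rule z)
    finally show ?thesis .
  qed
  from c obtain e0 where e0: "e0 \<in> ?E" "c e0 \<noteq> 0" by blast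
  have "c' (s e0) = 0" by (rule zero_polynom_imp_zero_coeffs[OF key sb[OF e0(1)]])
  then show False using e0 by (simp add: c'_def the_inv_into_f_f[OF inj])
qed



definition Pu :: "nat \<Rightarrow> nat \<Rightarrow> nat \<Rightarrow> (nat \<times> nat \<times> nat \<Rightarrow> complex) \<Rightarrow> complex" where
  "Pu n m u x = (\<Sum>l<n. x (0,l,u mod m) * x (1,l,u div m mod m) * x (2,l,u div (m*m)))"

lemma Pu_span:
  assumes "0 < m" "u < m^3"
  shows "Pu n m u \<in> FV.span (Mons ({..<3} \<times> {..<n} \<times> {..<m}) 3)"
proof -
  let ?X = "{..<3::nat} \<times> {..<n} \<times> {..<m}"
  have fin: "finite ?X" by auto
  have r: "u div (m*m) < m"
  proof -
    have "u < m * m * m" using assms by (simp add: power3_eq_cube)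
    then show ?thesis using assms by (simp add: div_less_iff_less_mult mult.commute)
  qed
  have "Pu n m u = (\<lambda>x. \<Sum>l<n. x (0,l,u mod m) * x (1,l,u div m mod m) * x (2,l,u div (m*m)))"
    by (simp add: Pu_def fun_eq_iff)
  also have "\<dots> \<in> FV.span (Mons ?X 3)"
  proof (rule span_sum)
    fix l assume l: "l \<in> {..<n}"
    have v1: "(\<lambda>x. x (0::nat,l,u mod m)) \<in> FV.span (Mons ?X 1)"
      using l assms by (intro FV.span_base var_Mons fin) auto
    have v2: "(\<lambda>x. x (1::nat,l,u div m mod m)) \<in> FV.span (Mons ?X 1)"
      using l assms by (intro FV.span_base var_Mons fin) auto
    have v3: "(\<lambda>x. x (2::nat,l,u div (m*m))) \<in> FV.span (Mons ?X 1)"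
      using l r by (intro FV.span_base var_Mons fin) auto
    have eq3: "(1::nat)+1+1 = 3" by simp
    from span_mult[OF span_mult[OF v1 v2] v3]
    show "(\<lambda>x. x (0,l,u mod m) * x (1,l,u div m mod m) * x (2,l,u div (m*m))) \<in> FV.span (Mons ?X 3)"
      by (simp only: eq3)
  qed simp
  finally show ?thesis .
qed

lemma count_ineq:
  fixes n m :: nat
  assumes m: "19 \<le> m" and n: "n \<le> 2*m+1"
  shows "(3*(m^3)*(m^3)+1) ^ (3*n*m) < (m^3+1)^(m^3)"
proof -
  let ?D = "m^3"
  have a: "3*?D*?D+1 \<le> (?D+1)^3" by (simp add: power3_eq_cube algebra_simps)
  have "(3*?D*?D+1) ^ (3*n*m) \<le> ((?D+1)^3)^(3*n*m)" by (rule power_mono[OF a]) simp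
  also have "\<dots> = (?D+1)^(9*n*m)" by (simp add: power_mult[symmetric] mult.assoc)
  also have "\<dots> < (?D+1)^?D"
  proof -
    have "9*n*m \<le> 9*(2*m+1)*m" using n by simp
    also have "\<dots> = m * (18*m + 9)" by (simp add: algebra_simps)
    also have "\<dots> < m * (m*m)"
    proof -
      have "18*m + 9 < 19 * m" using m by simp
      also have "\<dots> \<le> m * m" using m by simp
      finally show ?thesis using m by simp
    qed
    also have "\<dots> = ?D" by (simp add: power3_eq_cube)
    finally have "9*n*m < ?D" .
    moreover have "1 < ?D + 1" using m by simp
    ultimately show ?thesis by (simp add: power_strict_increasing_iff)
  qed
  finally show ?thesis .
qed

lemma main_poly:
  fixes n m :: nat
  assumes m: "19 \<le> m" and n: "n \<le> 2*m+1"
  shows "\<exists>c. (\<exists>e\<in>PiE {..<m^3} (\<lambda>_. {..m^3}). c e \<noteq> 0) \<and>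
     (\<forall>x. (\<Sum>e\<in>PiE {..<m^3} (\<lambda>_. {..m^3}). c e * (\<Prod>u<m^3. Pu n m u x ^ e u)) = 0)"
proof -
  let ?D = "m^3"
  let ?E = "PiE {..<?D} (\<lambda>_. {..?D})"
  let ?X = "{..<3::nat} \<times> {..<n} \<times> {..<m}"
  let ?T = "Mons ?X (3*?D*?D)"
  define g where "g e = (\<lambda>x. \<Prod>u<?D. Pu n m u x ^ e u)" for e :: "nat \<Rightarrow> nat"
  have sp: "g ` ?E \<subseteq> FV.span ?T"
  proof
    fix h assume "h \<in> g ` ?E"
    then obtain e where e: "e \<in> ?E" "h = g e" by blast
    have "g e \<in> FV.span (Mons ?X (\<Sum>u<?D. 3 * e u))"
      unfolding g_def
      by (rule span_prod) (use m in \<open>auto intro!: span_power Pu_span\<close>)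
    moreover have "(\<Sum>u<?D. 3 * e u) \<le> 3*?D*?D"
    proof -
      have "(\<Sum>u<?D. 3 * e u) \<le> (\<Sum>u<?D. 3 * ?D)"
        using e(1) by (intro sum_mono) (auto simp: PiE_iff)
      then show ?thesis by simp
    qed
    ultimately show "h \<in> FV.span ?T" using e(2) FV.span_mono[OF Mons_mono] by blast
  qed
  have "card ?T \<le> (3*?D*?D+1)^card ?X" by (rule Mons_card) auto
  also have "card ?X = 3*n*m" by (simp add: card_cartesian_product)
  also have "(3*?D*?D+1)^(3*n*m) < (?D+1)^?D" by (rule count_ineq[OF m n])
  also have "(?D+1)^?D = card ?E" by (simp add: card_PiE)
  finally have card: "card ?T < card ?E" .
  have f1: "finite ?E" by (simp add: finite_PiE)
  have f2: "finite ?T" by (rule Mons_finite) auto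
  from dep_exists[OF f1 f2 sp card] show ?thesis by (simp add: g_def)
qed



lemma mmult_zero_right: "mmult n M 0 = 0" by (simp add: mmult_def fun_eq_iff)
lemma mmult_zero_left: "mmult n 0 M = 0" by (simp add: mmult_def fun_eq_iff)

lemma mmult_mid: "mmult n (mscale a (mid n)) (mscale b (mid n)) = mscale (a*b) (mid n)"
proof -
  have "(\<Sum>l<n. a * (if i = l \<and> i < n then 1 else 0) * (b * (if l = j \<and> l < n then 1 else 0)))
        = (a*b) * (if i = j \<and> i < n then 1 else 0)" for i j
  proof -
    have "(\<Sum>l<n. a * (if i = l \<and> i < n then 1 else 0) * (b * (if l = j \<and> l < n then 1 else 0)))
        = (\<Sum>l<n. if l = i then (if i = j \<and> i < n then a*b else 0) else 0)"
      by (rule sum.cong) auto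
    also have "\<dots> = (a*b) * (if i = j \<and> i < n then 1 else 0)" by (simp add: sum.delta)
    finally show ?thesis .
  qed
  then show ?thesis by (simp add: mmult_def mscale_def mid_def fun_eq_iff)
qed

lemma gen_algebra_small:
  assumes "F \<subseteq> {0}"
  shows "gen_algebra n F \<subseteq> {mscale c (mid n) | c. True}"
proof -
  let ?S = "{mscale c (mid n) | c. True}"
  have "subalgebra_mats n ?S"
    unfolding subalgebra_mats_def
  proof (intro conjI ballI allI)
    show "?S \<subseteq> sqmats n" by (auto simp: sqmats_def mscale_def mid_def)
    show "0 \<in> ?S" by (auto simp: mscale_def fun_eq_iff intro!: exI[of _ 0])
    fix X Y assume "X \<in> ?S" "Y \<in> ?S"
    then obtain a b where ab: "X = mscale a (mid n)" "Y = mscale b (mid n)" by auto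
    show "X + Y \<in> ?S" using ab by (auto simp: mscale_def fun_eq_iff algebra_simps intro!: exI[of _ "a+b"])
    show "mmult n X Y \<in> ?S" using ab by (auto simp: mmult_mid)
  next
    fix c X assume "X \<in> ?S"
    then obtain a where "X = mscale a (mid n)" by auto
    then show "mscale c X \<in> ?S" by (auto simp: mscale_def fun_eq_iff intro!: exI[of _ "c*a"])
  qed
  moreover have "F \<subseteq> ?S" using assms by (auto simp: mscale_def fun_eq_iff intro!: exI[of _ 0])
  moreover have "mid n \<in> ?S" by (auto simp: mscale_def fun_eq_iff intro!: exI[of _ 1])
  ultimately show ?thesis unfolding gen_algebra_def by blast
qed

definition Ekk :: "nat \<Rightarrow> cmat" where
  "Ekk k = (\<lambda>i j. if i = k \<and> j = k then 1 else 0)"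

lemma Ekk_inj: "inj Ekk"
  by (rule injI) (auto simp: Ekk_def fun_eq_iff split: if_splits)

lemma Ekk_indep: "MV.independent (Ekk ` {..<n})"
proof (rule MV.independent_if_scalars_zero)
  show "finite (Ekk ` {..<n})" by simp
  fix c v assume z: "(\<Sum>v\<in>Ekk ` {..<n}. mscale (c v) v) = 0"
  assume "v \<in> Ekk ` {..<n}"
  then obtain k where k: "k < n" "v = Ekk k" by auto
  have "0 = (\<Sum>v\<in>Ekk ` {..<n}. mscale (c v) v) k k" using z by simp
  also have "\<dots> = (\<Sum>j<n. mscale (c (Ekk j)) (Ekk j)) k k"
    by (simp add: sum.reindex[OF inj_on_subset[OF Ekk_inj]])
  also have "\<dots> = (\<Sum>j<n. mscale (c (Ekk j)) (Ekk j) k k)" by (simp add: sum_fun_app)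
  also have "\<dots> = (\<Sum>j<n. if j = k then c (Ekk k) else 0)"
    by (rule sum.cong) (auto simp: mscale_def Ekk_def)
  also have "\<dots> = c (Ekk k)" using k by simp
  finally show "c v = 0" using k by simp
qed

definition Eij :: "nat \<Rightarrow> nat \<Rightarrow> cmat" where
  "Eij a b = (\<lambda>i j. if i = a \<and> j = b then 1 else 0)"

lemma sqmats_span: "sqmats n \<subseteq> MV.span ((\<lambda>(a,b). Eij a b) ` ({..<n} \<times> {..<n}))"
proof
  fix M assume M: "M \<in> sqmats n"
  have "M = (\<Sum>p\<in>{..<n} \<times> {..<n}. mscale (M (fst p) (snd p)) (Eij (fst p) (snd p)))"
  proof (intro ext)
    fix i j
    have "(\<Sum>p\<in>{..<n} \<times> {..<n}. mscale (M (fst p) (snd p)) (Eij (fst p) (snd p))) i j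
        = (\<Sum>p\<in>{..<n} \<times> {..<n}. if p = (i,j) then M i j else 0)"
      unfolding sum_fun_app by (rule sum.cong) (auto simp: mscale_def Eij_def)
    also have "\<dots> = M i j" using M by (auto simp: sqmats_def)
    finally show "M i j = (\<Sum>p\<in>{..<n} \<times> {..<n}. mscale (M (fst p) (snd p)) (Eij (fst p) (snd p))) i j" by simp
  qed
  also have "\<dots> \<in> MV.span ((\<lambda>(a,b). Eij a b) ` ({..<n} \<times> {..<n}))"
    by (intro MV.span_sum MV.span_scale MV.span_base) auto
  finally show "M \<in> MV.span ((\<lambda>(a,b). Eij a b) ` ({..<n} \<times> {..<n}))" .
qed

lemma card_le_mdim:
  assumes "B \<subseteq> V" "V \<subseteq> sqmats n" "MV.independent B"
  shows "card B \<le> mdim V"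
proof -
  obtain C where C: "C \<subseteq> V" "MV.independent C" "V \<subseteq> MV.span C" "card C = MV.dim V"
    using MV.basis_exists by blast
  have "finite C"
    using MV.independent_span_bound[OF _ C(2), of "(\<lambda>(a,b). Eij a b) ` ({..<n} \<times> {..<n})"]
      C(1) assms(2) sqmats_span by blast
  have "card B \<le> card C"
    using MV.independent_span_bound[OF \<open>finite C\<close> assms(3)] assms(1) C(3) by blast
  then show ?thesis using C(4) by (simp add: mdim_def)
qed

lemma good_small:
  assumes "F \<subseteq> {0}" "1 \<le> n"
  shows "good_family n F"
  unfolding good_family_def
proof (intro conjI ballI)
  fix X assume "X \<in> F" then show "symmetric_cmat n X" using assms by (auto simp: symmetric_cmat_def)
next
  fix X Y assume "X \<in> F" "Y \<in> F" then show "mmult n X Y = mmult n Y X" using assms by auto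
next
  have "gen_algebra n F \<subseteq> MV.span {mid n}"
    using gen_algebra_small[OF assms(1)] by (auto intro: MV.span_scale MV.span_base)
  from MV.dim_le_card[OF this] show "mdim (gen_algebra n F) \<le> n" using assms(2) by (simp add: mdim_def)
next
  have "Ekk ` {..<n} \<subseteq> centralizer n F"
    using assms(1) by (auto simp: centralizer_def sqmats_def Ekk_def mmult_zero_right mmult_zero_left)
  moreover have "centralizer n F \<subseteq> sqmats n" by (auto simp: centralizer_def)
  ultimately have "card (Ekk ` {..<n}) \<le> mdim (centralizer n F)" by (rule card_le_mdim[OF _ _ Ekk_indep])
  then show "n \<le> mdim (centralizer n F)"
    by (simp add: card_image[OF inj_on_subset[OF Ekk_inj]])
qed



definition wv :: "nat \<Rightarrow> complex" where "wv i = (if even i then 1 else \<i>)"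

definition Tm :: "nat \<Rightarrow> (nat \<Rightarrow> complex) \<Rightarrow> ctensor" where
  "Tm m y i j k = (if i < 2*m \<and> j < 2*m \<and> k < 2*m
     then y (i div 2 + m*(j div 2) + m*m*(k div 2)) * wv i * wv j * wv k else 0)"

lemma pair_sum: "(\<Sum>s<2*(M::nat). (f s::complex)) = (\<Sum>q<M. f (2*q) + f (2*q+1))"
  by (induction M) (auto simp: add.commute add.left_commute)

lemma iso_sum:
  assumes "2*m \<le> n"
  shows "(\<Sum>s<n. if s < 2*m then wv s * wv s * h (s div 2) else 0) = 0"
proof -
  have "(\<Sum>s<n. if s < 2*m then wv s * wv s * h (s div 2) else 0) = (\<Sum>s<2*m. wv s * wv s * h (s div 2))"
    by (rule sum.mono_neutral_cong_right) (use assms in auto)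
  also have "\<dots> = (\<Sum>q<m. h q + \<i> * \<i> * h q)"
    unfolding pair_sum by (rule sum.cong) (auto simp: wv_def)
  also have "\<dots> = 0" by simp
  finally show ?thesis .
qed

lemma C1: "2*m \<le> n \<Longrightarrow> (\<Sum>s<n. Tm m y s a b * Tm m y s c d) = 0"
proof -
  assume n: "2*m \<le> n"
  have "(\<Sum>s<n. Tm m y s a b * Tm m y s c d) = (\<Sum>s<n. if s < 2*m then wv s * wv s *
     (\<lambda>q. if a < 2*m \<and> b < 2*m \<and> c < 2*m \<and> d < 2*m then
        y (q + m*(a div 2) + m*m*(b div 2)) * wv a * wv b * (y (q + m*(c div 2) + m*m*(d div 2)) * wv c * wv d) else 0) (s div 2) else 0)"
    by (rule sum.cong) (auto simp: Tm_def mult_ac)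
  also have "\<dots> = 0" by (rule iso_sum[OF n])
  finally show ?thesis .
qed

lemma C2: "2*m \<le> n \<Longrightarrow> (\<Sum>s<n. Tm m y a s b * Tm m y c s d) = 0"
proof -
  assume n: "2*m \<le> n"
  have "(\<Sum>s<n. Tm m y a s b * Tm m y c s d) = (\<Sum>s<n. if s < 2*m then wv s * wv s *
     (\<lambda>q. if a < 2*m \<and> b < 2*m \<and> c < 2*m \<and> d < 2*m then
        y (a div 2 + m*q + m*m*(b div 2)) * wv a * wv b * (y (c div 2 + m*q + m*m*(d div 2)) * wv c * wv d) else 0) (s div 2) else 0)"
    by (rule sum.cong) (auto simp: Tm_def mult_ac)
  also have "\<dots> = 0" by (rule iso_sum[OF n])
  finally show ?thesis .
qed

lemma C3: "2*m \<le> n \<Longrightarrow> (\<Sum>s<n. Tm m y a b s * Tm m y c d s) = 0"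
proof -
  assume n: "2*m \<le> n"
  have "(\<Sum>s<n. Tm m y a b s * Tm m y c d s) = (\<Sum>s<n. if s < 2*m then wv s * wv s *
     (\<lambda>q. if a < 2*m \<and> b < 2*m \<and> c < 2*m \<and> d < 2*m then
        y (a div 2 + m*(b div 2) + m*m*q) * wv a * wv b * (y (c div 2 + m*(d div 2) + m*m*q) * wv c * wv d) else 0) (s div 2) else 0)"
    by (rule sum.cong) (auto simp: Tm_def mult_ac)
  also have "\<dots> = 0" by (rule iso_sum[OF n])
  finally show ?thesis .
qed

lemma fams_zero:
  assumes n: "2*m \<le> n" and M: "M \<in> {xslice (Tm m y), yslice (Tm m y), zslice (Tm m y)}"
  shows "fam_TM n M \<subseteq> {0}" "fam_MT n M \<subseteq> {0}"
  using M
  by (auto simp: fam_TM_def fam_MT_def mmult_def mtrans_def xslice_def yslice_def zslice_def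
      fun_eq_iff C1[OF n] C2[OF n] C3[OF n])



lemma cont_eval: "continuous_on UNIV (\<lambda>T::ctensor. T i j k)"
proof -
  have "continuous_on UNIV (\<lambda>T::ctensor. T i)" by simp
  then have "continuous_on UNIV (\<lambda>T::ctensor. T i j)" by (rule continuous_on_product_then_coordinatewise)
  then show ?thesis by (rule continuous_on_product_then_coordinatewise)
qed

lemma idx_decomp: "u mod m + m * (u div m mod m) + m * m * (u div (m * m)) = (u::nat)"
proof -
  have "u div (m*m) = u div m div m" by (simp add: div_mult2_eq)
  then have "m * (u div m mod m) + m * m * (u div (m * m)) = m * (u div m)"
    by (metis distrib_left mod_mult_div_eq mult.assoc)
  then show ?thesis by (metis add.assoc mod_mult_div_eq)
qed

lemma idx_bound: "u < m^3 \<Longrightarrow> u div (m*m) < (m::nat)"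
proof -
  assume "u < m^3"
  then have "u < m * m * m" by (simp add: power3_eq_cube)
  then show ?thesis by (simp add: less_mult_imp_div_less mult.commute mult.left_commute)
qed

theorem theorem52:
  shows "\<exists>N. \<forall>n\<ge>N. \<exists>T \<in> tensors n. T \<notin> closure (OT n) \<and>
    (\<forall>M \<in> {xslice T, yslice T, zslice T}.
       good_family n (fam_TM n M) \<and> good_family n (fam_MT n M))"
proof (intro exI[of _ 38] allI impI)
  fix n :: nat assume n38: "38 \<le> n"
  define m where "m = n div 2"
  have m19: "19 \<le> m" using n38 unfolding m_def by simp
  have n1: "n \<le> 2*m+1" "2*m \<le> n" unfolding m_def by auto
  let ?D = "m^3"
  let ?E = "PiE {..<?D} (\<lambda>_. {..?D})"
  obtain c where c: "\<exists>e\<in>?E. c e \<noteq> 0"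
    and cz: "\<And>x. (\<Sum>e\<in>?E. c e * (\<Prod>u<?D. Pu n m u x ^ e u)) = 0"
    using main_poly[OF m19 n1(1)] by blast
  obtain y where y: "(\<Sum>e\<in>?E. c e * (\<Prod>u<?D. y u ^ e u)) \<noteq> 0"
    using poly_nonzero[OF c] by blast
  define G where "G T = (\<Sum>e\<in>?E. c e * (\<Prod>u<?D.
      (T (2*(u mod m)) (2*(u div m mod m)) (2*(u div (m*m)))) ^ e u))" for T :: ctensor
  have Gc: "continuous_on UNIV G"
    unfolding G_def by (intro continuous_intros cont_eval)
  have cl: "closed {T. G T = 0}"
    using closed_Collect_eq[OF Gc continuous_on_const] .
  have OT0: "OT n \<subseteq> {T. G T = 0}"
  proof
    fix T assume "T \<in> OT n"
    then obtain A B C \<alpha> where T: "\<And>i j k. i < n \<Longrightarrow> j < n \<Longrightarrow> k < n \<Longrightarrow>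
        T i j k = (\<Sum>l<n. \<alpha> l * A l i * B l j * C l k)"
      unfolding OT_def by blast
    define x where "x = (\<lambda>(s::nat,l::nat,p::nat). if s = 0 then \<alpha> l * A l (2*p)
        else if s = 1 then B l (2*p) else C l (2*p))"
    have "G T = (\<Sum>e\<in>?E. c e * (\<Prod>u<?D. Pu n m u x ^ e u))"
      unfolding G_def
    proof (intro sum.cong refl arg_cong2[where f="(*)"] prod.cong)
      fix e u assume u: "u \<in> {..<?D}"
      have m0: "0 < m" using m19 by simp
      have b1: "u mod m < m" "u div m mod m < m" using m0 by simp_all
      have b2: "u div (m*m) < m" using idx_bound[of u m] u by auto
      have "2*(u mod m) < n" "2*(u div m mod m) < n" "2*(u div (m*m)) < n"
        using n1(2) b1 b2 by linarith+
      then show "T (2*(u mod m)) (2*(u div m mod m)) (2*(u div (m*m))) ^ e u = Pu n m u x ^ e u"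
        by (simp add: T Pu_def x_def mult.assoc)
    qed
    also have "\<dots> = 0" by (rule cz)
    finally show "T \<in> {T. G T = 0}" by simp
  qed
  have clos: "closure (OT n) \<subseteq> {T. G T = 0}" by (rule closure_minimal[OF OT0 cl])
  define T where "T = Tm m y"
  have GT: "G T \<noteq> 0"
  proof -
    have "G T = (\<Sum>e\<in>?E. c e * (\<Prod>u<?D. y u ^ e u))"
      unfolding G_def
    proof (intro sum.cong refl arg_cong2[where f="(*)"] prod.cong)
      fix e u assume u: "u \<in> {..<?D}"
      have m0: "0 < m" using m19 by simp
      have "u mod m < m" "u div m mod m < m" "u div (m*m) < m"
        using m0 idx_bound[of u m] u by auto
      then show "T (2*(u mod m)) (2*(u div m mod m)) (2*(u div (m*m))) ^ e u = y u ^ e u"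
        by (simp add: T_def Tm_def wv_def idx_decomp)
    qed
    then show ?thesis using y by simp
  qed
  show "\<exists>T \<in> tensors n. T \<notin> closure (OT n) \<and>
    (\<forall>M \<in> {xslice T, yslice T, zslice T}.
       good_family n (fam_TM n M) \<and> good_family n (fam_MT n M))"
  proof (intro bexI[of _ T] conjI ballI)
    show "T \<in> tensors n" using n1 by (auto simp: tensors_def T_def Tm_def)
    show "T \<notin> closure (OT n)" using GT clos by blast
    fix M assume M: "M \<in> {xslice T, yslice T, zslice T}"
    have n1': "1 \<le> n" using n38 by simp
    show "good_family n (fam_TM n M)"
      by (rule good_small[OF fams_zero(1)[OF n1(2)] n1']) (use M in \<open>simp add: T_def\<close>)
    show "good_family n (fam_MT n M)"
      by (rule good_small[OF fams_zero(2)[OF n1(2)] n1']) (use M in \<open>simp add: T_def\<close>)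
  qed
qed


end
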